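(* Let $P$ be a polyomino with consistent parity. Then $B(P,1)$ and $B(P,-1)$ both have consistent parity.
   Context: A cell is a unit square $[i,i+1]\times[j,j+1]$ with $i,j\in\mathbb{Z}$. A polyomino is a finite union of cells. A polyomino $P$ has consistent parity if all first coordinates of its corners have the same parity and all second coordinates of its corners have the same parity. Equivalently, there is an open $2\times 2$ square $S$ such that for all integers $i,j$, the translate $S'=S+(2i,2j)$ satisfies either $S'\subseteq P$ or $S'\cap P=\emptyset$. Distances are measured in the $L_\infty$-norm: $\mathrm{dist}(a,b)=\|a-b\|_\infty$, and $\mathrm{dist}(A,B)=\inf_{a\in A,b\in B}\mathrm{dist}(a,b)$. For $A\subseteq\mathbb{R}^2$ and $r\ge 0$, define $B(A,r)=\{x\in\mathbb{R}^2:\mathrm{dist}(x,A)\le r\}$. For $r<0$, define $B(A,r)=B(A^c,-r)^c$. *)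

theory Defs
  imports "HOL-Analysis.Analysis" "HOL-Library.Extended_Real"
begin

type_synonym pt = "real \<times> real"

definition cell :: "int \<Rightarrow> int \<Rightarrow> pt set" where
  "cell i j = {p. of_int i \<le> fst p \<and> fst p \<le> of_int i + 1 \<and>
                  of_int j \<le> snd p \<and> snd p \<le> of_int j + 1}"

definition polyomino :: "pt set \<Rightarrow> bool" where
  "polyomino P \<longleftrightarrow> (\<exists>C :: (int \<times> int) set. finite C \<and> P = (\<Union>(i,j)\<in>C. cell i j))"

definition linf :: "pt \<Rightarrow> pt \<Rightarrow> real" where
  "linf a b = max \<bar>fst a - fst b\<bar> \<bar>snd a - snd b\<bar>"

text \<open>dist(x,A) = inf over a in A of linf x a, in the extended reals (+infinity for empty A).\<close>
definition setdist :: "pt \<Rightarrow> pt set \<Rightarrow> ereal" where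
  "setdist x A = (INF a\<in>A. ereal (linf x a))"

definition Bnbhd :: "pt set \<Rightarrow> real \<Rightarrow> pt set" where
  "Bnbhd A r = (if 0 \<le> r then {x. setdist x A \<le> ereal r}
                else - {x. setdist x (- A) \<le> ereal (- r)})"

definition open_sq2 :: "real \<Rightarrow> real \<Rightarrow> pt set" where
  "open_sq2 a b = {p. a < fst p \<and> fst p < a + 2 \<and> b < snd p \<and> snd p < b + 2}"

definition consistent_parity :: "pt set \<Rightarrow> bool" where
  "consistent_parity P \<longleftrightarrow> (\<exists>a b. \<forall>i j :: int.
      open_sq2 (a + 2 * of_int i) (b + 2 * of_int j) \<subseteq> P \<or>
      open_sq2 (a + 2 * of_int i) (b + 2 * of_int j) \<inter> P = {})"

end

theory Submission
  imports Defs
begin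

lemma pick_pt:
  fixes lo hi c :: real
  assumes "lo < hi"
  shows "\<exists>q. lo < q \<and> q < hi \<and> q \<noteq> c"
proof (cases "c = lo + (hi - lo)/2")
  case True
  then show ?thesis using assms by (intro exI[of _ "lo + (hi-lo)/4"]) (auto simp: field_simps)
next
  case False
  then show ?thesis using assms by (intro exI[of _ "lo + (hi-lo)/2"]) (auto simp: field_simps)
qed

definition thick :: "pt set \<Rightarrow> bool" where
  "thick Q \<longleftrightarrow> (\<forall>p\<in>Q. \<forall>u1 v1 u2 v2 c1 c2. u1 < fst p \<and> fst p < v1 \<and> u2 < snd p \<and> snd p < v2 \<longrightarrow>
     (\<exists>q\<in>Q. u1 < fst q \<and> fst q < v1 \<and> u2 < snd q \<and> snd q < v2 \<and> fst q \<noteq> c1 \<and> snd q \<noteq> c2))"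

lemma key:
  assumes cp: "\<forall>i j :: int. open_sq2 (a + 2 * of_int i) (b + 2 * of_int j) \<subseteq> Q \<or>
      open_sq2 (a + 2 * of_int i) (b + 2 * of_int j) \<inter> Q = {}"
    and th: "thick Q"
    and x: "x \<in> open_sq2 (a + 1 + 2 * of_int i) (b + 1 + 2 * of_int j)"
  shows "setdist x Q \<le> ereal 1 \<longleftrightarrow>
    (\<exists>s t. s \<in> {0,1} \<and> t \<in> {0,1} \<and> open_sq2 (a + 2 * of_int (i+s)) (b + 2 * of_int (j+t)) \<subseteq> Q)"
proof
  define A where "A = a + 2 + 2 * of_int i"
  define Bc where "Bc = b + 2 + 2 * of_int j"
  have x1: "\<bar>fst x - A\<bar> < 1" and x2: "\<bar>snd x - Bc\<bar> < 1"
    using x by (auto simp: open_sq2_def A_def Bc_def)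
  assume "setdist x Q \<le> ereal 1"
  define e where "e = min (1 - \<bar>fst x - A\<bar>) (1 - \<bar>snd x - Bc\<bar>)"
  have e: "e > 0" using x1 x2 by (simp add: e_def)
  have "setdist x Q < ereal (1 + e)" using \<open>setdist x Q \<le> ereal 1\<close> e
  proof -
    have "ereal 1 < ereal (1 + e)" using e by simp
    then show ?thesis using \<open>setdist x Q \<le> ereal 1\<close> by (rule order_le_less_trans[rotated])
  qed
  then obtain p where p: "p \<in> Q" "linf x p < 1 + e"
    unfolding setdist_def by (auto simp: INF_less_iff)
  have p1: "A - 2 < fst p \<and> fst p < A + 2" and p2: "Bc - 2 < snd p \<and> snd p < Bc + 2"
    using p(2) x1 x2 unfolding linf_def e_def by (auto simp: abs_if split: if_splits)
  obtain q where q: "q \<in> Q" "A - 2 < fst q" "fst q < A + 2" "Bc - 2 < snd q" "snd q < Bc + 2"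
    "fst q \<noteq> A" "snd q \<noteq> Bc"
    using th p(1) p1 p2 unfolding thick_def by blast
  define s :: int where "s = (if fst q < A then 0 else 1)"
  define t :: int where "t = (if snd q < Bc then 0 else 1)"
  have "q \<in> open_sq2 (a + 2 * of_int (i+s)) (b + 2 * of_int (j+t))"
    using q unfolding open_sq2_def s_def t_def A_def Bc_def by auto
  then have "open_sq2 (a + 2 * of_int (i+s)) (b + 2 * of_int (j+t)) \<subseteq> Q"
    using cp q(1) by blast
  then show "\<exists>s t. s \<in> {0,1} \<and> t \<in> {0,1} \<and> open_sq2 (a + 2 * of_int (i+s)) (b + 2 * of_int (j+t)) \<subseteq> Q"
    unfolding s_def t_def by (intro exI[of _ s] exI[of _ t]) (auto simp: s_def t_def)
next
  assume "\<exists>s t. s \<in> {0,1} \<and> t \<in> {0,1} \<and> open_sq2 (a + 2 * of_int (i+s)) (b + 2 * of_int (j+t)) \<subseteq> Q"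
  then obtain s t :: int where st: "s \<in> {0,1}" "t \<in> {0,1}"
    and sub: "open_sq2 (a + 2 * of_int (i+s)) (b + 2 * of_int (j+t)) \<subseteq> Q" by blast
  define m1 where "m1 = a + 2 * of_int (i+s) + 1"
  define m2 where "m2 = b + 2 * of_int (j+t) + 1"
  define z where "z = ((fst x + m1)/2, (snd x + m2)/2)"
  have d1: "\<bar>fst x - m1\<bar> < 2" and d2: "\<bar>snd x - m2\<bar> < 2"
    using x st by (auto simp: open_sq2_def m1_def m2_def)
  have "z \<in> open_sq2 (a + 2 * of_int (i+s)) (b + 2 * of_int (j+t))"
    using d1 d2 by (auto simp: open_sq2_def z_def m1_def m2_def abs_if split: if_splits)
  then have zQ: "z \<in> Q" using sub by blast
  have "linf x z < 1" using d1 d2 by (auto simp: linf_def z_def abs_if field_simps split: if_splits)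
  have "setdist x Q \<le> ereal (linf x z)" unfolding setdist_def using zQ by (rule INF_lower)
  also have "\<dots> \<le> ereal 1" using \<open>linf x z < 1\<close> by simp
  finally show "setdist x Q \<le> ereal 1" .
qed

lemma cell_eq: "cell i j = {real_of_int i..of_int i + 1} \<times> {real_of_int j..of_int j + 1}"
  by (auto simp: cell_def)

lemma closed_cell: "closed (cell i j)"
  unfolding cell_eq by (intro closed_Times closed_atLeastAtMost)

lemma thick_P:
  assumes "finite C" "P = (\<Union>(i,j)\<in>C. cell i j)"
  shows "thick P"
  unfolding thick_def
proof (intro ballI allI impI)
  fix p u1 v1 u2 v2 c1 c2
  assume pP: "p \<in> P" and r: "u1 < fst p \<and> fst p < v1 \<and> u2 < snd p \<and> snd p < v2"
  then obtain m n where mn: "(m,n) \<in> C" "p \<in> cell m n" using assms by auto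
  have "max (of_int m) u1 < min (of_int m + 1) v1" using mn r by (auto simp: cell_def)
  then obtain q1 where q1: "max (of_int m) u1 < q1" "q1 < min (of_int m + 1) v1" "q1 \<noteq> c1"
    using pick_pt by blast
  have "max (of_int n) u2 < min (of_int n + 1) v2" using mn r by (auto simp: cell_def)
  then obtain q2 where q2: "max (of_int n) u2 < q2" "q2 < min (of_int n + 1) v2" "q2 \<noteq> c2"
    using pick_pt by blast
  have "(q1,q2) \<in> cell m n" using q1 q2 by (auto simp: cell_def)
  then have "(q1,q2) \<in> P" using mn assms by auto
  then show "\<exists>q\<in>P. u1 < fst q \<and> fst q < v1 \<and> u2 < snd q \<and> snd q < v2 \<and> fst q \<noteq> c1 \<and> snd q \<noteq> c2"
    using q1 q2 by (intro bexI[of _ "(q1,q2)"]) auto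
qed

lemma thick_open:
  assumes "open (U :: pt set)"
  shows "thick U"
  unfolding thick_def
proof (intro ballI allI impI)
  fix p u1 v1 u2 v2 c1 c2
  assume pP: "p \<in> U" and r: "u1 < fst p \<and> fst p < v1 \<and> u2 < snd p \<and> snd p < v2"
  obtain e where e: "e > 0" "\<And>y. dist y p < e \<Longrightarrow> y \<in> U"
    using assms pP unfolding open_dist by blast
  have "max (fst p - e/2) u1 < min (fst p + e/2) v1" using e r by auto
  then obtain q1 where q1: "max (fst p - e/2) u1 < q1" "q1 < min (fst p + e/2) v1" "q1 \<noteq> c1"
    using pick_pt by blast
  have "max (snd p - e/2) u2 < min (snd p + e/2) v2" using e r by auto
  then obtain q2 where q2: "max (snd p - e/2) u2 < q2" "q2 < min (snd p + e/2) v2" "q2 \<noteq> c2"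
    using pick_pt by blast
  have "dist (q1,q2) p = sqrt ((dist q1 (fst p))\<^sup>2 + (dist q2 (snd p))\<^sup>2)"
    by (metis dist_Pair_Pair prod.collapse)
  also have "\<dots> \<le> \<bar>dist q1 (fst p)\<bar> + \<bar>dist q2 (snd p)\<bar>" by (rule sqrt_sum_squares_le_sum_abs)
  also have "\<dots> < e" using q1 q2 by (auto simp: dist_real_def)
  finally have "(q1,q2) \<in> U" using e by blast
  then show "\<exists>q\<in>U. u1 < fst q \<and> fst q < v1 \<and> u2 < snd q \<and> snd q < v2 \<and> fst q \<noteq> c1 \<and> snd q \<noteq> c2"
    using q1 q2 by (intro bexI[of _ "(q1,q2)"]) auto
qed

theorem lemma3:
  fixes P :: "(real \<times> real) set"
  assumes "polyomino P" and "consistent_parity P"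
  shows "consistent_parity (Bnbhd P 1) \<and> consistent_parity (Bnbhd P (-1))"
proof -
  obtain C where C: "finite C" "P = (\<Union>(i,j)\<in>C. cell i j)"
    using assms(1) unfolding polyomino_def by blast
  have "closed P" using C by (auto intro!: closed_UN closed_cell)
  then have thN: "thick (- P)" by (intro thick_open) (simp add: open_Compl)
  have thP: "thick P" using C by (rule thick_P)
  obtain a b where cp: "\<forall>i j :: int. open_sq2 (a + 2 * of_int i) (b + 2 * of_int j) \<subseteq> P \<or>
      open_sq2 (a + 2 * of_int i) (b + 2 * of_int j) \<inter> P = {}"
    using assms(2) unfolding consistent_parity_def by blast
  have cpN: "\<forall>i j :: int. open_sq2 (a + 2 * of_int i) (b + 2 * of_int j) \<subseteq> - P \<or>
      open_sq2 (a + 2 * of_int i) (b + 2 * of_int j) \<inter> - P = {}"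
    using cp by blast
  have sh: "a + 1 + 2 * of_int i = (a + 1) + 2 * of_int i" "b + 1 + 2 * of_int j = (b + 1) + 2 * of_int j"
    for i j :: int by simp_all
  have c1: "consistent_parity (Bnbhd P 1)"
    unfolding consistent_parity_def
  proof (rule exI[of _ "a+1"], rule exI[of _ "b+1"], intro allI)
    fix i j :: int
    define E where "E = (\<exists>s t. s \<in> {0,1} \<and> t \<in> {0,1} \<and> open_sq2 (a + 2 * of_int (i+s)) (b + 2 * of_int (j+t)) \<subseteq> P)"
    have "x \<in> Bnbhd P 1 \<longleftrightarrow> E" if "x \<in> open_sq2 (a + 1 + 2 * of_int i) (b + 1 + 2 * of_int j)" for x
      using key[OF cp thP that] unfolding Bnbhd_def E_def by simp
    then show "open_sq2 (a + 1 + 2 * of_int i) (b + 1 + 2 * of_int j) \<subseteq> Bnbhd P 1 \<or>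
      open_sq2 (a + 1 + 2 * of_int i) (b + 1 + 2 * of_int j) \<inter> Bnbhd P 1 = {}"
      by blast
  qed
  have c2: "consistent_parity (Bnbhd P (-1))"
    unfolding consistent_parity_def
  proof (rule exI[of _ "a+1"], rule exI[of _ "b+1"], intro allI)
    fix i j :: int
    define E where "E = (\<exists>s t. s \<in> {0,1} \<and> t \<in> {0,1} \<and> open_sq2 (a + 2 * of_int (i+s)) (b + 2 * of_int (j+t)) \<subseteq> - P)"
    have "x \<in> Bnbhd P (-1) \<longleftrightarrow> \<not> E" if "x \<in> open_sq2 (a + 1 + 2 * of_int i) (b + 1 + 2 * of_int j)" for x
      using key[OF cpN thN that] unfolding Bnbhd_def E_def by simp
    then show "open_sq2 (a + 1 + 2 * of_int i) (b + 1 + 2 * of_int j) \<subseteq> Bnbhd P (-1) \<or>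
      open_sq2 (a + 1 + 2 * of_int i) (b + 1 + 2 * of_int j) \<inter> Bnbhd P (-1) = {}"
      by blast
  qed
  show ?thesis using c1 c2 by blast
qed

end
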